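(* Let $(A,\star)$ be a permutative algebra and $(B,\bullet,\{\cdot,\cdot\})$ a Poisson algebra. Define bilinear operations on $A\otimes B$ by $$(x\otimes a)\circ_{A\otimes B}(y\otimes b)=(x\star y)\otimes(a\bullet b),\qquad [x\otimes a,y\otimes b]_{A\otimes B}=(x\star y)\otimes\{a,b\},$$ for $x,y\in A$, $a,b\in B$. Then $(A\otimes B,\circ_{A\otimes B},[\cdot,\cdot]_{A\otimes B})$ is a dual pre-Poisson algebra.
   Context: Field $\mathbb{F}$ of characteristic $0$. A permutative algebra: $x\star(y\star z)=(x\star y)\star z=(y\star x)\star z$. A Poisson algebra $(B,\bullet,\{\cdot,\cdot\})$: $(B,\bullet)$ commutative associative, $(B,\{\cdot,\cdot\})$ a Lie algebra, and $\{x,y\bullet z\}=\{x,y\}\bullet z+y\bullet\{x,z\}$. A dual pre-Poisson algebra is a vector space with bilinear operations $\circ,[\cdot,\cdot]$ satisfying: $x\circ(y\circ z)=(x\circ y)\circ z=(y\circ x)\circ z$; $[x,[y,z]]=[[x,y],z]+[y,[x,z]]$; $[x,y\circ z]=[x,y]\circ z+y\circ[x,z]$; $[x\circ y,z]=x\circ[y,z]+y\circ[x,z]$; $[x,y]\circ z=-[y,x]\circ z$. *)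

theory Defs
  imports Complex_Main
begin

definition bilin ::
  "('k::field \<Rightarrow> 'a::ab_group_add \<Rightarrow> 'a) \<Rightarrow> ('k \<Rightarrow> 'b::ab_group_add \<Rightarrow> 'b) \<Rightarrow>
   ('k \<Rightarrow> 'c::ab_group_add \<Rightarrow> 'c) \<Rightarrow> ('a \<Rightarrow> 'b \<Rightarrow> 'c) \<Rightarrow> bool" where
  "bilin sA sB sC f \<longleftrightarrow>
     (\<forall>x. Vector_Spaces.linear sB sC (f x)) \<and> (\<forall>y. Vector_Spaces.linear sA sC (\<lambda>x. f x y))"

text \<open>Tensor product of vector spaces: (T, tens) with tens bilinear, the pure
  tensors spanning T, and every bilinear form on A x B factoring through a
  linear functional on T (universal property; uniqueness follows from spanning).\<close>

definition is_tensor_product ::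
  "('k::field \<Rightarrow> 'a::ab_group_add \<Rightarrow> 'a) \<Rightarrow> ('k \<Rightarrow> 'b::ab_group_add \<Rightarrow> 'b) \<Rightarrow>
   ('k \<Rightarrow> 't::ab_group_add \<Rightarrow> 't) \<Rightarrow> ('a \<Rightarrow> 'b \<Rightarrow> 't) \<Rightarrow> bool" where
  "is_tensor_product sA sB sT tens \<longleftrightarrow>
     vector_space sA \<and> vector_space sB \<and> vector_space sT \<and>
     bilin sA sB sT tens \<and>
     module.span sT {tens x y | x y. True} = UNIV \<and>
     (\<forall>\<phi> :: 'a \<Rightarrow> 'b \<Rightarrow> 'k. bilin sA sB (*) \<phi> \<longrightarrow>
        (\<exists>g. Vector_Spaces.linear sT (*) g \<and> (\<forall>x y. g (tens x y) = \<phi> x y)))"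

definition permutative_algebra ::
  "('k::field \<Rightarrow> 'a::ab_group_add \<Rightarrow> 'a) \<Rightarrow> ('a \<Rightarrow> 'a \<Rightarrow> 'a) \<Rightarrow> bool" where
  "permutative_algebra sA mul \<longleftrightarrow> vector_space sA \<and> bilin sA sA sA mul \<and>
     (\<forall>x y z. mul x (mul y z) = mul (mul x y) z \<and> mul (mul x y) z = mul (mul y x) z)"

definition lie_algebra ::
  "('k::field \<Rightarrow> 'a::ab_group_add \<Rightarrow> 'a) \<Rightarrow> ('a \<Rightarrow> 'a \<Rightarrow> 'a) \<Rightarrow> bool" where
  "lie_algebra sB br \<longleftrightarrow> vector_space sB \<and> bilin sB sB sB br \<and>
     (\<forall>x. br x x = 0) \<and>
     (\<forall>x y z. br x (br y z) + br y (br z x) + br z (br x y) = 0)"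

definition poisson_algebra ::
  "('k::field \<Rightarrow> 'b::ab_group_add \<Rightarrow> 'b) \<Rightarrow> ('b \<Rightarrow> 'b \<Rightarrow> 'b) \<Rightarrow> ('b \<Rightarrow> 'b \<Rightarrow> 'b) \<Rightarrow> bool" where
  "poisson_algebra sB mul br \<longleftrightarrow> vector_space sB \<and> bilin sB sB sB mul \<and>
     (\<forall>x y. mul x y = mul y x) \<and> (\<forall>x y z. mul (mul x y) z = mul x (mul y z)) \<and>
     lie_algebra sB br \<and>
     (\<forall>x y z. br x (mul y z) = mul (br x y) z + mul y (br x z))"

definition dual_pre_poisson_algebra ::
  "('k::field \<Rightarrow> 't::ab_group_add \<Rightarrow> 't) \<Rightarrow> ('t \<Rightarrow> 't \<Rightarrow> 't) \<Rightarrow> ('t \<Rightarrow> 't \<Rightarrow> 't) \<Rightarrow> bool" where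
  "dual_pre_poisson_algebra sT circ br \<longleftrightarrow> vector_space sT \<and>
     bilin sT sT sT circ \<and> bilin sT sT sT br \<and>
     (\<forall>x y z. circ x (circ y z) = circ (circ x y) z \<and> circ (circ x y) z = circ (circ y x) z) \<and>
     (\<forall>x y z. br x (br y z) = br (br x y) z + br y (br x z)) \<and>
     (\<forall>x y z. br x (circ y z) = circ (br x y) z + circ y (br x z)) \<and>
     (\<forall>x y z. br (circ x y) z = circ x (br y z) + circ y (br x z)) \<and>
     (\<forall>x y z. circ (br x y) z = - circ (br y x) z)"

end

theory Submission
  imports Defs
begin

lemma ext_span:
  assumes vs: "vector_space sT" and sp: "module.span sT S = UNIV"
    and f: "Vector_Spaces.linear sT sT f" and g: "Vector_Spaces.linear sT sT g"
    and eq: "\<And>x. x \<in> S \<Longrightarrow> f x = g x"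
  shows "f x = g x"
proof -
  interpret vector_space_pair sT sT using vs by (simp add: vector_space_pair_def)
  show ?thesis using linear_eq_on_span[OF f g eq] sp by auto
qed

lemma ext3:
  fixes sT :: "'k::field \<Rightarrow> 't::ab_group_add \<Rightarrow> 't"
  assumes vs: "vector_space sT" and sp: "module.span sT {tens x y | x y. True} = UNIV"
    and F1: "\<And>y z. Vector_Spaces.linear sT sT (\<lambda>x. F x y z)"
    and F2: "\<And>x z. Vector_Spaces.linear sT sT (\<lambda>y. F x y z)"
    and F3: "\<And>x y. Vector_Spaces.linear sT sT (\<lambda>z. F x y z)"
    and G1: "\<And>y z. Vector_Spaces.linear sT sT (\<lambda>x. G x y z)"
    and G2: "\<And>x z. Vector_Spaces.linear sT sT (\<lambda>y. G x y z)"
    and G3: "\<And>x y. Vector_Spaces.linear sT sT (\<lambda>z. G x y z)"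
    and pure: "\<And>x y z a b c. F (tens x a) (tens y b) (tens z c) = G (tens x a) (tens y b) (tens z c)"
  shows "F u v w = G u v w"
proof -
  let ?S = "{tens x y | x y. True}"
  have s1: "F u q r = G u q r" if qS: "q \<in> ?S" and rS: "r \<in> ?S" for u q r
  proof -
    obtain y b where q: "q = tens y b" using qS by blast
    obtain z c where r: "r = tens z c" using rS by blast
    have "F p q r = G p q r" if pS: "p \<in> ?S" for p
    proof -
      obtain x a where "p = tens x a" using pS by blast
      then show ?thesis unfolding q r by (simp only: pure)
    qed
    then show ?thesis by (rule ext_span[OF vs sp F1 G1])
  qed
  have s2: "F u v r = G u v r" if "r \<in> ?S" for u v r
  proof -
    have "F u p r = G u p r" if "p \<in> ?S" for p using s1 that \<open>r \<in> ?S\<close> .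
    then show ?thesis by (rule ext_span[OF vs sp F2 G2])
  qed
  have "F u v p = G u v p" if "p \<in> ?S" for p using s2 that .
  then show ?thesis by (rule ext_span[OF vs sp F3 G3])
qed

theorem proposition2p12:
  fixes sA :: "'k::field_char_0 \<Rightarrow> 'a::ab_group_add \<Rightarrow> 'a"
    and sB :: "'k \<Rightarrow> 'b::ab_group_add \<Rightarrow> 'b"
    and sT :: "'k \<Rightarrow> 't::ab_group_add \<Rightarrow> 't"
    and star :: "'a \<Rightarrow> 'a \<Rightarrow> 'a"
    and bullet :: "'b \<Rightarrow> 'b \<Rightarrow> 'b" and pb :: "'b \<Rightarrow> 'b \<Rightarrow> 'b"
    and tens :: "'a \<Rightarrow> 'b \<Rightarrow> 't"
    and circ :: "'t \<Rightarrow> 't \<Rightarrow> 't" and br :: "'t \<Rightarrow> 't \<Rightarrow> 't"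
  assumes "permutative_algebra sA star"
    and "poisson_algebra sB bullet pb"
    and "is_tensor_product sA sB sT tens"
    and "bilin sT sT sT circ" and "bilin sT sT sT br"
    and "\<And>x y a b. circ (tens x a) (tens y b) = tens (star x y) (bullet a b)"
    and "\<And>x y a b. br (tens x a) (tens y b) = tens (star x y) (pb a b)"
  shows "dual_pre_poisson_algebra sT circ br"
proof -
  note A = assms(1)[unfolded permutative_algebra_def]
  note B = assms(2)[unfolded poisson_algebra_def lie_algebra_def]
  note T = assms(3)[unfolded is_tensor_product_def]
  have vs: "vector_space sT" and sp: "module.span sT {tens x y | x y. True} = UNIV"
    using T by auto
  have sdist: "sT c (p + q) = sT c p + sT c q" "sT c (- p) = - sT c p" for c p q
    using vs unfolding module_iff_vector_space[symmetric] by (simp_all add: module.scale_right_distrib module.scale_minus_right)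
  have cl: "circ (p + q) r = circ p r + circ q r" "circ p (q + r) = circ p q + circ p r"
     "circ (sT c p) r = sT c (circ p r)" "circ p (sT c q) = sT c (circ p q)" for p q r c
    using assms(4) unfolding bilin_def Vector_Spaces.linear_iff by auto
  have bl: "br (p + q) r = br p r + br q r" "br p (q + r) = br p q + br p r"
     "br (sT c p) r = sT c (br p r)" "br p (sT c q) = sT c (br p q)" for p q r c
    using assms(5) unfolding bilin_def Vector_Spaces.linear_iff by auto
  have tl: "tens u (p + q) = tens u p + tens u q" "tens u (- p) = - tens u p" for u p q
  proof -
    have "Vector_Spaces.linear sB sT (tens u)" using T unfolding bilin_def by auto
    then show "tens u (p + q) = tens u p + tens u q" "tens u (- p) = - tens u p"
      using linear_iff_module_hom module_hom.add module_hom.neg by metis+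
  qed
  have pbl: "pb p (q + r) = pb p q + pb p r" "pb (p + q) r = pb p r + pb q r" for p q r
    using B unfolding bilin_def Vector_Spaces.linear_iff by auto
  have pbn: "pb p (- q) = - pb p q" for p q
  proof -
    have "Vector_Spaces.linear sB sB (pb p)" using B unfolding bilin_def by auto
    then show ?thesis using linear_iff_module_hom module_hom.neg by metis
  qed
  have anti: "pb p q = - pb q p" for p q
  proof -
    have "0 = pb (p + q) (p + q)" using B by auto
    also have "\<dots> = pb p p + pb p q + (pb q p + pb q q)" by (simp add: pbl add.assoc)
    also have "\<dots> = pb p q + pb q p" using B by simp
    finally show ?thesis by (simp add: eq_neg_iff_add_eq_0)
  qed
  have jac: "pb a (pb b c) = pb (pb a b) c + pb b (pb a c)" for a b c
  proof -
    have "pb a (pb b c) + pb b (pb c a) + pb c (pb a b) = 0" using B by auto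
    moreover have "pb b (pb c a) = - pb b (pb a c)" by (simp only: anti[of c a] pbn)
    moreover have "pb c (pb a b) = - pb (pb a b) c" by (rule anti)
    ultimately show ?thesis by (simp add: algebra_simps eq_neg_iff_add_eq_0)
  qed
  have leib: "pb (bullet a b) c = bullet a (pb b c) + bullet b (pb a c)" for a b c
  proof -
    have "pb (bullet a b) c = - pb c (bullet a b)" by (rule anti)
    also have "\<dots> = - (bullet (pb c a) b + bullet a (pb c b))" using B by auto
    also have "\<dots> = bullet (pb a c) b + bullet a (pb b c)"
    proof -
      have "Vector_Spaces.linear sB sB (\<lambda>x. bullet x b)" "Vector_Spaces.linear sB sB (bullet a)"
        using B unfolding bilin_def by auto
      then have "bullet (pb c a) b = - bullet (pb a c) b" "bullet a (pb c b) = - bullet a (pb b c)"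
        using anti linear_iff_module_hom module_hom.neg by metis+
      then show ?thesis by simp
    qed
    finally show ?thesis using B by (simp add: add.commute)
  qed
  have pa: "star x (star y z) = star (star x y) z" "star (star x y) z = star (star y x) z" for x y z
    using A by auto
  have pa2: "star y (star x z) = star (star x y) z" for x y z
    by (simp only: pa(1) pa(2)[of y x])
  have bc: "bullet a b = bullet b a" "bullet (bullet a b) c = bullet a (bullet b c)" for a b c
    using B by auto
  have bc3: "bullet a (bullet b c) = bullet b (bullet a c)" for a b c
  proof -
    have "bullet a (bullet b c) = bullet (bullet a b) c" by (simp only: bc(2))
    also have "\<dots> = bullet (bullet b a) c" by (simp only: bc(1)[of a b])
    also have "\<dots> = bullet b (bullet a c)" by (simp only: bc(2))
    finally show ?thesis .
  qed
  have bn: "bullet (- p) c = - bullet p c" for p c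
  proof -
    have "Vector_Spaces.linear sB sB (\<lambda>x. bullet x c)" using B unfolding bilin_def by auto
    then show ?thesis using linear_iff_module_hom module_hom.neg by metis
  qed
  have pure2: "tens (star x (star y z)) (pb a (pb b c)) =
      tens (star (star x y) z) (pb (pb a b) c) + tens (star y (star x z)) (pb b (pb a c))" for x y z a b c
    by (simp only: pa(1)[of x y z] pa2[where x=x and y=y and z=z] tl(1)[symmetric] jac[of a b c])
  have pure5: "tens u (bullet (pb a b) c) = - tens u (bullet (pb b a) c)" for u a b c
    by (simp only: anti[of a b] bn tl(2))
  have pure5b: "tens (star (star x y) z) (bullet (pb a b) c) = - tens (star (star y x) z) (bullet (pb b a) c)"
    for x y z a b c
    using pure5[of "star (star x y) z" a b c] pa(2)[of x y z] by simp
  note ls = Vector_Spaces.linear_iff vs cl bl sdist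
  show ?thesis
    unfolding dual_pre_poisson_algebra_def
  proof (intro conjI allI vs assms(4,5))
    fix x y z
    show "circ x (circ y z) = circ (circ x y) z"
      by (rule ext3[OF vs sp, where F="\<lambda>x y z. circ x (circ y z)" and G="\<lambda>x y z. circ (circ x y) z"])
         (simp_all add: ls assms(6) pa bc bc3)
    show "circ (circ x y) z = circ (circ y x) z"
      by (rule ext3[OF vs sp, where F="\<lambda>x y z. circ (circ x y) z" and G="\<lambda>x y z. circ (circ y x) z"])
         (simp_all add: ls assms(6) pa bc bc3)
    show "br x (br y z) = br (br x y) z + br y (br x z)"
      apply (rule ext3[OF vs sp, where F="\<lambda>x y z. br x (br y z)" and G="\<lambda>x y z. br (br x y) z + br y (br x z)"])
      prefer 7 apply (simp only: assms(7)) apply (rule pure2)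
      by (simp_all add: ls)
    show "br x (circ y z) = circ (br x y) z + circ y (br x z)"
      by (rule ext3[OF vs sp, where F="\<lambda>x y z. br x (circ y z)" and G="\<lambda>x y z. circ (br x y) z + circ y (br x z)"])
         (simp_all add: ls assms(6,7) pa pa2 tl B)
    show "br (circ x y) z = circ x (br y z) + circ y (br x z)"
      by (rule ext3[OF vs sp, where F="\<lambda>x y z. br (circ x y) z" and G="\<lambda>x y z. circ x (br y z) + circ y (br x z)"])
         (simp_all add: ls assms(6,7) pa pa2 tl leib)
    show "circ (br x y) z = - circ (br y x) z"
      apply (rule ext3[OF vs sp, where F="\<lambda>x y z. circ (br x y) z" and G="\<lambda>x y z. - circ (br y x) z"])
      prefer 7 apply (simp only: assms(6,7)) apply (rule pure5b)
      by (simp_all add: ls)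
  qed
qed

end
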